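(* For every integer $n \geq 1$, the number of edges of the finite linear Jaco graph $J_n(x)$ is $$\varepsilon(J_n(x)) \;=\; \sum_{i=1}^{n} \left\lfloor \frac{2(i+1)}{3+\sqrt{5}} \right\rfloor .$$ (Equivalently, the sequence $(\varepsilon(J_n(x)))_{n\ge 1}$ is OEIS sequence A183137 with its $n=0$ term omitted.)
   Context: The finite linear Jaco graph $J_n(x)$ is the simple undirected graph on the vertex set $\{v_1,\dots,v_n\}$ defined as follows. $J_1(x)$ is the single vertex $v_1$. $J_2(x)$ is the single edge $v_1v_2$. For $n \geq 3$, start from the graph on $\{v_1,\dots,v_n\}$ with exactly the two edges $v_1v_2$ and $v_2v_3$. Then, for $i = 3,4,\dots,n-1$ in increasing order, let $d_i$ be the current degree of $v_i$ and add the edges $v_iv_{i+1}, v_iv_{i+2},\dots,v_iv_{i+t}$, where $t$ is the largest integer with $i+t \le n$ such that after adding these edges the degree of $v_i$ is at most $i$ (that is, $t=\max(0,\min(i-d_i,\,n-i))$). The graph obtained after step $i=n-1$ is $J_n(x)$. $\varepsilon(G)$ denotes the number of edges of a graph $G$. *)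

theory Defs
  imports Complex_Main
begin

text \<open>Simple undirected graphs on vertices 1..n; an edge is a 2-element set of vertices.\<close>

definition jaco_deg :: "nat set set \<Rightarrow> nat \<Rightarrow> nat" where
  "jaco_deg E v = card {e \<in> E. v \<in> e}"

text \<open>Step i: add edges v_i v_{i+1}, ..., v_i v_{i+t} with t = max 0 (min (i - d_i) (n - i)).
  Natural-number subtraction truncates at 0, which realizes the max with 0.\<close>
definition jaco_step :: "nat \<Rightarrow> nat set set \<Rightarrow> nat \<Rightarrow> nat set set" where
  "jaco_step n E i = E \<union> {{i, j} | j. i < j \<and> j \<le> i + min (i - jaco_deg E i) (n - i)}"

definition jaco_edges :: "nat \<Rightarrow> nat set set" where
  "jaco_edges n =
     (if n \<le> 1 then {}
      else if n = 2 then {{1, 2}}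
      else foldl (jaco_step n) {{1, 2}, {2, 3}} [3..<n])"

definition jaco_vertices :: "nat \<Rightarrow> nat set" where
  "jaco_vertices n = {1..n}"

end

theory Submission imports Defs "HOL-Computational_Algebra.Primes" begin

lemma sqrt5_irrat: "sqrt 5 \<notin> \<rat>"
proof
  have e: "{2..<5} = {2,3,4::nat}" by auto
  have pr: "prime (5::nat)" unfolding prime_nat_iff' e by simp
  define p :: nat where "p = 5"
  have pp: "prime p" using pr p_def by simp
  from pp have p: "p > 1" by (rule prime_gt_1_nat)
  assume "sqrt 5 \<in> \<rat>"
  then have "sqrt p \<in> \<rat>" by (simp add: p_def)
  then obtain m n :: nat
    where n: "n \<noteq> 0"
      and sqrt_rat: "\<bar>sqrt p\<bar> = m / n"
      and "coprime m n" by (rule Rats_abs_nat_div_natE)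
  have eq: "m\<^sup>2 = p * n\<^sup>2"
  proof -
    from n and sqrt_rat have "m = \<bar>sqrt p\<bar> * n" by simp
    then have "m\<^sup>2 = (sqrt p)\<^sup>2 * n\<^sup>2" by (simp add: power_mult_distrib)
    also have "(sqrt p)\<^sup>2 = p" by simp
    also have "\<dots> * n\<^sup>2 = p * n\<^sup>2" by simp
    finally show ?thesis by linarith
  qed
  have "p dvd m \<and> p dvd n"
  proof
    from eq have "p dvd m\<^sup>2" ..
    with pp show "p dvd m" by (rule prime_dvd_power)
    then obtain k where "m = p * k" ..
    with eq have "p * n\<^sup>2 = p\<^sup>2 * k\<^sup>2" by algebra
    with p have "n\<^sup>2 = p * k\<^sup>2" by (simp add: power2_eq_square)
    then have "p dvd n\<^sup>2" ..
    with pp show "p dvd n" by (rule prime_dvd_power)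
  qed
  then have "p dvd gcd m n" by simp
  with \<open>coprime m n\<close> have "p = 1" by simp
  with p show False by simp
qed

definition cc :: real where "cc = (sqrt 5 - 1) / 2"

lemma cc_eq: "cc * cc + cc = 1"
  unfolding cc_def by (simp add: field_simps)

lemma cc_bounds: "0 < cc" "cc < 1"
proof -
  have "1 < sqrt 5" by (rule real_less_rsqrt) simp
  have "sqrt 5 < 3" by (rule real_less_lsqrt) simp_all
  then show "0 < cc" "cc < 1" using \<open>1 < sqrt 5\<close> unfolding cc_def by simp_all
qed

lemma cc_nonint: "(real i + 1) * cc \<noteq> real_of_int m"
proof
  assume h: "(real i + 1) * cc = real_of_int m"
  have "sqrt 5 = (2 * real_of_int m + real i + 1) / (real i + 1)"
    using h unfolding cc_def by (simp add: field_simps)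
  also have "\<dots> \<in> \<rat>" by simp
  finally show False using sqrt5_irrat by simp
qed

definition gg :: "nat \<Rightarrow> nat" where "gg i = nat \<lfloor>(real i + 1) * cc\<rfloor>"

lemma key: "gg i \<le> j \<longleftrightarrow> i \<le> j + gg j"
proof -
  have fl: "\<lfloor>(real k + 1) * cc\<rfloor> \<ge> 0" for k using cc_bounds by simp
  have A: "i \<le> j + gg j \<longleftrightarrow> real i + 1 \<le> (real j + 1) * (1 + cc)"
  proof -
    have "i \<le> j + gg j \<longleftrightarrow> int i - int j \<le> \<lfloor>(real j + 1) * cc\<rfloor>"
      unfolding gg_def using fl[of j] by linarith
    also have "\<dots> \<longleftrightarrow> real i - real j \<le> (real j + 1) * cc"
      by (metis floor_le_iff le_floor_iff of_int_diff of_int_of_nat_eq)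
    also have "\<dots> \<longleftrightarrow> real i + 1 \<le> (real j + 1) * (1 + cc)"
      by (simp add: algebra_simps)
    finally show ?thesis .
  qed
  have B: "real i + 1 \<le> (real j + 1) * (1 + cc) \<longleftrightarrow> (real i + 1) * cc \<le> real j + 1"
  proof -
    have "(real j + 1) * (1 + cc) * cc = (real j + 1) * (cc * cc + cc)" by (simp add: algebra_simps)
    then have "(real j + 1) * (1 + cc) * cc = real j + 1" using cc_eq by simp
    then show ?thesis using cc_bounds
      by (metis mult_le_cancel_right_pos mult_right_mono nle_le order.strict_iff_not)
  qed
  have C: "(real i + 1) * cc \<le> real j + 1 \<longleftrightarrow> (real i + 1) * cc < real j + 1"
    using cc_nonint[of i "int j + 1"] by auto
  have D: "(real i + 1) * cc < real j + 1 \<longleftrightarrow> gg i \<le> j"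
    unfolding gg_def using fl[of i] by (simp add: floor_less_iff nat_le_iff) linarith
  show ?thesis using A B C D by simp
qed

lemma gg_le: "gg k \<le> k" using key[of k k] by simp

lemma gg_small: "gg 0 = 0" "gg 1 = 1" "gg 2 = 1"
proof -
  have a: "2 < sqrt 5" by (rule real_less_rsqrt) simp
  have "sqrt 5 < 7/3" by (rule real_less_lsqrt) (simp_all add: power2_eq_square)
  with a have "\<lfloor>cc\<rfloor> = 0" "\<lfloor>2 * cc\<rfloor> = 1" "\<lfloor>3 * cc\<rfloor> = 1"
    unfolding cc_def by (simp_all add: floor_eq_iff)
  thus "gg 0 = 0" "gg 1 = 1" "gg 2 = 1" unfolding gg_def by simp_all
qed

definition TT :: "nat \<Rightarrow> nat \<Rightarrow> nat set set" where
  "TT n k = {{a,b} | a b. a < b \<and> a < k \<and> b \<le> n \<and> b \<le> a + gg a}"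

lemma deg_TT: assumes "k \<le> n" shows "jaco_deg (TT n k) k = k - gg k"
proof -
  have "{e \<in> TT n k. k \<in> e} = (\<lambda>a. {a,k}) ` {gg k..<k}"
  proof (rule set_eqI, rule iffI)
    fix e assume "e \<in> {e \<in> TT n k. k \<in> e}"
    then obtain a b where "e = {a,b}" "a < b" "a < k" "b \<le> n" "b \<le> a + gg a" "k \<in> e"
      unfolding TT_def by blast
    then show "e \<in> (\<lambda>a. {a,k}) ` {gg k..<k}" using key[of k a] by auto
  next
    fix e assume "e \<in> (\<lambda>a. {a,k}) ` {gg k..<k}"
    then obtain a where "e = {a,k}" "gg k \<le> a" "a < k" by auto
    then show "e \<in> {e \<in> TT n k. k \<in> e}" using key[of k a] assms unfolding TT_def by blast
  qed
  moreover have "inj_on (\<lambda>a. {a,k}) {gg k..<k}" by (auto simp: inj_on_def doubleton_eq_iff)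
  ultimately show ?thesis unfolding jaco_deg_def by (simp add: card_image)
qed

lemma TT_I: "a < b \<Longrightarrow> a < k \<Longrightarrow> b \<le> n \<Longrightarrow> b \<le> a + gg a \<Longrightarrow> {a,b} \<in> TT n k"
  unfolding TT_def by blast

lemma TT_E: assumes "e \<in> TT n k"
  obtains a b where "e = {a,b}" "a < b" "a < k" "b \<le> n" "b \<le> a + gg a"
  using assms unfolding TT_def by blast

lemma step_TT: assumes "k < n" shows "jaco_step n (TT n k) k = TT n (Suc k)"
proof -
  have d: "k - jaco_deg (TT n k) k = gg k" using deg_TT[of k n] assms gg_le[of k] by simp
  show ?thesis unfolding jaco_step_def d
  proof (rule set_eqI, rule iffI)
    fix e assume "e \<in> TT n k \<union> {{k, j} |j. k < j \<and> j \<le> k + min (gg k) (n - k)}"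
    then show "e \<in> TT n (Suc k)"
    proof (elim UnE)
      assume "e \<in> TT n k"
      then obtain a b where "e = {a,b}" "a < b" "a < k" "b \<le> n" "b \<le> a + gg a" by (rule TT_E)
      then show "e \<in> TT n (Suc k)" using TT_I[of a b "Suc k" n] by simp
    next
      assume "e \<in> {{k, j} |j. k < j \<and> j \<le> k + min (gg k) (n - k)}"
      then obtain j where "e = {k,j}" "k < j" "j \<le> k + min (gg k) (n - k)" by blast
      then show "e \<in> TT n (Suc k)" using assms TT_I[of k j "Suc k" n] by simp
    qed
  next
    fix e assume "e \<in> TT n (Suc k)"
    then obtain a b where ab: "e = {a,b}" "a < b" "a < Suc k" "b \<le> n" "b \<le> a + gg a"
      by (rule TT_E)
    show "e \<in> TT n k \<union> {{k, j} |j. k < j \<and> j \<le> k + min (gg k) (n - k)}"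
    proof (cases "a = k")
      case True
      then have "k < b \<and> b \<le> k + min (gg k) (n - k)" using ab assms by simp
      then show ?thesis using ab True by blast
    next
      case False then have "e \<in> TT n k" using ab TT_I[of a b k n] by simp
      then show ?thesis by simp
    qed
  qed
qed

lemma fold_TT: "3 \<le> k \<Longrightarrow> k \<le> n \<Longrightarrow> foldl (jaco_step n) {{1,2},{2,3}} [3..<k] = TT n k"
proof (induction k rule: dec_induct)
  case base
  show ?case
  proof (rule set_eqI, rule iffI)
    fix e assume "e \<in> foldl (jaco_step n) {{1, 2}, {2, 3}} [3..<3]"
    then have "e = {1,2} \<or> e = {2,3}" by simp
    moreover have "{1,2} \<in> TT n 3" using base gg_small by (intro TT_I) simp_all
    moreover have "{2,3} \<in> TT n 3" using base gg_small by (intro TT_I) simp_all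
    ultimately show "e \<in> TT n 3" by blast
  next
    fix e assume "e \<in> TT n 3"
    then obtain a b where ab: "e = {a,b}" "a < b" "a < 3" "b \<le> n" "b \<le> a + gg a"
      unfolding TT_def by blast
    then have "a = 1 \<and> b = 2 \<or> a = 2 \<and> b = 3"
      using gg_small by (auto simp: less_Suc_eq numeral_eq_Suc)
    then show "e \<in> foldl (jaco_step n) {{1, 2}, {2, 3}} [3..<3]" using ab by auto
  qed
next
  case (step k)
  then show ?case using step_TT[of k n] by simp
qed

lemma card_TT: "card (TT n n) = (\<Sum>i=1..n. i - gg i)"
proof (induction n)
  case 0
  have "TT 0 0 = {}" unfolding TT_def by auto
  then show ?case by simp
next
  case (Suc n)
  have eq: "TT (Suc n) (Suc n) = TT n n \<union> (\<lambda>a. {a, Suc n}) ` {gg (Suc n)..<Suc n}"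
  proof (rule set_eqI, rule iffI)
    fix e assume "e \<in> TT (Suc n) (Suc n)"
    then obtain a b where ab: "e = {a,b}" "a < b" "a < Suc n" "b \<le> Suc n" "b \<le> a + gg a"
      unfolding TT_def by blast
    show "e \<in> TT n n \<union> (\<lambda>a. {a, Suc n}) ` {gg (Suc n)..<Suc n}"
    proof (cases "b = Suc n")
      case True then show ?thesis using ab key[of "Suc n" a] by auto
    next
      case False then have "e \<in> TT n n" using ab TT_I[of a b n n] by simp
      then show ?thesis by simp
    qed
  next
    fix e assume "e \<in> TT n n \<union> (\<lambda>a. {a, Suc n}) ` {gg (Suc n)..<Suc n}"
    then show "e \<in> TT (Suc n) (Suc n)"
    proof (elim UnE)
      assume "e \<in> TT n n"
      then obtain a b where "e = {a,b}" "a < b" "a < n" "b \<le> n" "b \<le> a + gg a" by (rule TT_E)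
      then show ?thesis using TT_I[of a b "Suc n" "Suc n"] by simp
    next
      assume "e \<in> (\<lambda>a. {a, Suc n}) ` {gg (Suc n)..<Suc n}"
      then obtain a where "e = {a, Suc n}" "gg (Suc n) \<le> a" "a < Suc n" by auto
      then show ?thesis using key[of "Suc n" a] unfolding TT_def by blast
    qed
  qed
  have fin: "finite (TT n n)"
  proof -
    have "TT n n \<subseteq> Pow {..n}" unfolding TT_def by auto
    then show ?thesis by (rule finite_subset) simp
  qed
  have disj: "TT n n \<inter> (\<lambda>a. {a, Suc n}) ` {gg (Suc n)..<Suc n} = {}"
  proof -
    have "Suc n \<notin> e" if "e \<in> TT n n" for e
      using that by (rule TT_E) auto
    then show ?thesis by auto
  qed
  have inj: "inj_on (\<lambda>a. {a, Suc n}) {gg (Suc n)..<Suc n}" by (auto simp: inj_on_def doubleton_eq_iff)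
  have "card (TT (Suc n) (Suc n)) = card (TT n n) + (Suc n - gg (Suc n))"
    unfolding eq using fin disj inj by (simp add: card_Un_disjoint card_image)
  then show ?case using Suc by simp
qed

lemma edges_TT: "jaco_edges n = TT n n"
proof -
  consider "n \<le> 1" | "n = 2" | "n \<ge> 3" by linarith
  then show ?thesis
  proof cases
    case 1
    have "\<not> (a < b \<and> a < n \<and> b \<le> n \<and> b \<le> a + gg a)" for a b
      using 1 gg_small by (cases a) auto
    then have "TT n n = {}" unfolding TT_def by blast
    then show ?thesis using 1 unfolding jaco_edges_def by simp
  next
    case 2
    have "TT 2 2 = {{1,2}}"
    proof (rule set_eqI, rule iffI)
      fix e assume "e \<in> TT 2 2"
      then obtain a b where ab: "e = {a,b}" "a < b" "a < 2" "b \<le> 2" "b \<le> a + gg a"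
        unfolding TT_def by blast
      then have "a = 1 \<and> b = 2" using gg_small by (auto simp: less_Suc_eq numeral_eq_Suc)
      then show "e \<in> {{1,2}}" using ab by simp
    next
      fix e assume "e \<in> {{1::nat,2}}"
      then show "e \<in> TT 2 2" using gg_small TT_I[of 1 2 2 2] by simp
    qed
    then show ?thesis using 2 unfolding jaco_edges_def by simp
  next
    case 3
    then show ?thesis using fold_TT[of n n] unfolding jaco_edges_def by simp
  qed
qed

lemma floor_term: "\<lfloor>2 * (real i + 1) / (3 + sqrt 5)\<rfloor> = int i - int (gg i)"
proof -
  have c: "2 / (3 + sqrt 5) = 1 - cc"
  proof -
    have "(1 - cc) * (3 + sqrt 5) = 2" unfolding cc_def by (simp add: field_simps)
    moreover have "3 + sqrt 5 > 0" by (simp add: add_pos_nonneg)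
    ultimately show ?thesis by (simp add: field_simps)
  qed
  define x where "x = (real i + 1) * cc"
  have "2 * (real i + 1) / (3 + sqrt 5) = (real i + 1) - x"
    unfolding x_def using c by (metis mult.commute times_divide_eq_right right_diff_distrib mult_1_right)
  moreover have "real_of_int \<lfloor>x\<rfloor> < x" using cc_nonint[of i "\<lfloor>x\<rfloor>"] unfolding x_def
    by (metis of_int_floor_le order.not_eq_order_implies_strict)
  moreover have "x < real_of_int \<lfloor>x\<rfloor> + 1" by linarith
  moreover have "int (gg i) = \<lfloor>x\<rfloor>" unfolding gg_def x_def using cc_bounds by simp
  ultimately show ?thesis by (simp add: floor_eq_iff) linarith
qed

theorem proposition1:
  fixes n :: nat
  assumes "n \<ge> 1"
  shows "int (card (jaco_edges n)) =
         (\<Sum>i = 1..n. \<lfloor>2 * (real i + 1) / (3 + sqrt 5)\<rfloor>)"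
proof -
  have "int (card (jaco_edges n)) = (\<Sum>i=1..n. int (i - gg i))"
    unfolding edges_TT card_TT by (simp add: of_nat_sum)
  also have "\<dots> = (\<Sum>i = 1..n. \<lfloor>2 * (real i + 1) / (3 + sqrt 5)\<rfloor>)"
  proof (rule sum.cong)
    fix i show "int (i - gg i) = \<lfloor>2 * (real i + 1) / (3 + sqrt 5)\<rfloor>"
      using floor_term[of i] gg_le[of i] by (metis of_nat_diff)
  qed simp
  finally show ?thesis .
qed

end
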